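(* In the setting described in the context, for all meta-contexts $\Delta$, LF contexts $\Psi,\Phi$, computation contexts $\Gamma,\Gamma'$: (a) If $\Delta;\Psi\xRightarrow{u}A$ then $\Delta;\Psi\Longrightarrow A$. (b) If $\Delta;\Psi\xRightarrow{u}\sigma{:}\Phi$ then $\Delta;\Psi\Longrightarrow\sigma{:}\Phi$. (c) If $\Delta;\Psi > x{:}A \rightrightarrows P$ then $\Delta;\Psi,x{:}A\Longrightarrow P$. (d) If $\Delta > X{:}U;\Psi\rightrightarrows P$ then $\Delta,X{:}U;\Psi\Longrightarrow P$. (e) If $\Delta;\Gamma\xRightarrow{R}\tau$ then $\Delta;\Gamma\Longrightarrow\tau$. (f) If $\Delta;\Gamma\gg\Gamma'\xRightarrow{L}[\Psi\vdash P]$ then $\Delta;\Gamma,\Gamma'\Longrightarrow[\Psi\vdash P]$. (g) If $\Delta;\Gamma > y{:}\tau\Rightarrow[\Psi\vdash P]$ then $\Delta;\Gamma,y{:}\tau\Longrightarrow[\Psi\vdash P]$.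
   Context: Setting: the core of the two-level logic of the proof assistant Beluga. A global signature $\Sigma$ of constant declarations $\mathbf{c}{:}A$ is fixed. Syntax: atomic LF types $P,Q ::= \mathbf{a}\,M_1\dots M_n$; LF types $A,B ::= P \mid \Pi x{:}A.\,B$, written $A\rightarrow B$ when $x$ does not occur in $B$ and $\Pi\hat{x}{:}A.\,B$ when it does. Neutral terms $R ::= x \mid \mathbf{c} \mid R\,N \mid u[\sigma]$; normal terms $M,N ::= R \mid \lambda x.\,M$; substitutions $\sigma ::= \cdot \mid \mathsf{wk}_\psi \mid \sigma, M$. LF contexts $\Psi,\Phi ::= \cdot \mid \Psi, x{:}A \mid \Psi,\hat{x}{:}A \mid \psi$ ($x{:}A$ proof-relevant assumption, $\hat{x}{:}A$ parameter, $\psi$ context variable). Meta-terms $C ::= (\hat\Psi\vdash R) \mid \Psi$; meta-types $U ::= (\Psi\vdash P) \mid G$ ($G$ a context schema); meta-contexts $\Delta ::= \cdot \mid \Delta, X{:}U$. Computation types $\tau ::= [\Psi\vdash P] \mid \tau_1\rightarrow\tau_2 \mid \Pi^{\Box}X{:}U.\,\tau$ (types $[\Psi\vdash P]$ are called box types); computation contexts $\Gamma ::= \cdot \mid \Gamma, y{:}\tau$ (order immaterial). $[\sigma]B$: hereditary application of a simultaneous substitution; $[M/\hat{x}]B$: hereditary substitution; $[\![C/X]\!]\tau$: meta-substitution. $\Delta;\Psi\vdash M\Leftarrow A$: standard checking judgment for canonical contextual LF; $\Delta\Vdash C\Leftarrow U$: checking judgment for meta-terms. Sequent calculus for contextual LF,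 $\Delta;\Psi\Longrightarrow A$: (init$^\Sigma$) $\Delta;\Psi\Longrightarrow A$ if $\mathbf{c}{:}A\in\Sigma$; (init$^\Psi$) $\Delta;\Psi,x{:}A\Longrightarrow A$ for proof-relevant $x$; ($\Pi R$) from $\Delta;\Psi,\hat{x}{:}A\Longrightarrow B$ infer $\Delta;\Psi\Longrightarrow\Pi\hat{x}{:}A.\,B$; ($\Pi L$) if $x_1{:}\Pi\hat{x}{:}A.\,B\in\Psi$, $\Delta;\Psi\vdash M\Leftarrow A$, $\Delta;\Psi,x_2{:}[M/\hat{x}]B\Longrightarrow A'$ then $\Delta;\Psi\Longrightarrow A'$; ($\rightarrow R$) from $\Delta;\Psi,x{:}A\Longrightarrow B$ infer $\Delta;\Psi\Longrightarrow A\rightarrow B$; ($\rightarrow L$) if $x_1{:}A\rightarrow B\in\Psi$, $\Delta;\Psi\Longrightarrow A$, $\Delta;\Psi,x_2{:}B\Longrightarrow A'$ then $\Delta;\Psi\Longrightarrow A'$; (reflect) if $u{:}(\Phi\vdash P)\in\Delta$, $\Delta;\Psi\Longrightarrow\sigma{:}\Phi$, $\Delta;\Psi,x{:}[\sigma]P\Longrightarrow A$ then $\Delta;\Psi\Longrightarrow A$. Substitutions $\Delta;\Psi\Longrightarrow\sigma{:}\Phi$: $\Delta;\Psi\Longrightarrow\cdot{:}\cdot$; $\Delta;\psi,\Psi\Longrightarrow\mathsf{wk}_\psi{:}\psi$; from $\Delta;\Psi\Longrightarrow\sigma{:}\Phi$ and $\Delta;\Psi\Longrightarrow N{:}[\sigma]B$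 infer $(\sigma,N){:}(\Phi,x{:}B)$; from $\Delta;\Psi\Longrightarrow\sigma{:}\Phi$ and $\Delta;\Psi\vdash M\Leftarrow[\sigma]B$ infer $(\sigma,M){:}(\Phi,\hat{x}{:}B)$. Sequent calculus for computations, $\Delta;\Gamma\Longrightarrow\tau$: ($\Pi^\Box R$) from $\Delta,X{:}U;\Gamma\Longrightarrow\tau$ infer $\Delta;\Gamma\Longrightarrow\Pi^\Box X{:}U.\,\tau$; ($\Pi^\Box L$) if $y_1{:}\Pi^\Box X{:}U.\,\tau'\in\Gamma$, $\Delta\Vdash C\Leftarrow U$, $\Delta;\Gamma,y_2{:}[\![C/X]\!]\tau'\Longrightarrow\tau$ then $\Delta;\Gamma\Longrightarrow\tau$; ($\rightarrow L$) if $y_1{:}\tau_1\rightarrow\tau_2\in\Gamma$, $\Delta;\Gamma\Longrightarrow\tau_1$, $\Delta;\Gamma,y_2{:}\tau_2\Longrightarrow\tau$ then $\Delta;\Gamma\Longrightarrow\tau$; ($\rightarrow R$) from $\Delta;\Gamma,y{:}\tau_1\Longrightarrow\tau_2$ infer $\Delta;\Gamma\Longrightarrow\tau_1\rightarrow\tau_2$; (init) $\Delta;\Gamma,y{:}\tau\Longrightarrow\tau$; ($\Box R$) from $\Delta;\Psi\Longrightarrow P$ infer $\Delta;\Gamma\Longrightarrow[\Psi\vdash P]$; ($\Box L$) if $y{:}[\Psi\vdash P]\in\Gamma$ and $\Delta,X{:}(\Psi\vdash P);\Gamma\Longrightarrow\tau$ then $\Delta;\Gamma\Longrightarrow\tau$.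 Focusing calculus for LF. Uniform judgment $\Delta;\Psi\xRightarrow{u}A$: ($\Pi R$) from $\Delta;\Psi,\hat{x}{:}A\xRightarrow{u}B$ infer $\Delta;\Psi\xRightarrow{u}\Pi\hat{x}{:}A.\,B$; ($\rightarrow R$) from $\Delta;\Psi,x{:}A\xRightarrow{u}B$ infer $\Delta;\Psi\xRightarrow{u}A\rightarrow B$; (transition$^\Delta$) if $X{:}(\Phi\vdash Q)\in\Delta$, $\Delta;\Psi\xRightarrow{u}\sigma{:}\Phi$ and $[\sigma]Q=P$ then $\Delta;\Psi\xRightarrow{u}P$; (transition$^\Psi$) if $x{:}A\in\Psi$ and $\Delta;\Psi>x{:}A\rightrightarrows P$ then $\Delta;\Psi\xRightarrow{u}P$. Uniform substitutions $\Delta;\Psi\xRightarrow{u}\sigma{:}\Phi$: same four rules as the sequent substitution judgment with $\Longrightarrow$ replaced by $\xRightarrow{u}$ (the $\hat{x}$ case still uses $\Delta;\Psi\vdash M\Leftarrow[\sigma]B$). Focused judgment $\Delta;\Psi>x{:}A\rightrightarrows P$: (init$^\Psi$) $\Delta;\Psi>x{:}P\rightrightarrows P$; ($\rightarrow L$) from $\Delta;\Psi\xRightarrow{u}A$ and $\Delta;\Psi>x'{:}B\rightrightarrows P$ infer $\Delta;\Psi>x{:}A\rightarrow B\rightrightarrows P$; ($\Pi L$) from $\Delta;\Psi\vdash M\Leftarrow A$ and $\Delta;\Psi>x'{:}[M/\hat{x}]B\rightrightarrows P$ infer $\Delta;\Psi>x{:}\Pi\hat{x}{:}A.\,B\rightrightarrows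 P$. Focus on a meta-assumption: $\Delta>X{:}U;\Psi\rightrightarrows P$ holds iff $U=(\Phi\vdash Q)$ and there is $\sigma$ with $\Delta,X{:}U;\Psi\xRightarrow{u}\sigma{:}\Phi$ and $[\sigma]Q=P$. Focusing calculus for computations. Uniform right $\Delta;\Gamma\xRightarrow{R}\tau$: ($\rightarrow R$) from $\Delta;\Gamma,y{:}\tau_1\xRightarrow{R}\tau_2$ infer $\Delta;\Gamma\xRightarrow{R}\tau_1\rightarrow\tau_2$; ($\Pi^\Box R$) from $\Delta,X{:}U;\Gamma\xRightarrow{R}\tau$ infer $\Delta;\Gamma\xRightarrow{R}\Pi^\Box X{:}U.\,\tau$; (left to right) from $\Delta;\cdot\gg\Gamma\xRightarrow{L}[\Psi\vdash P]$ infer $\Delta;\Gamma\xRightarrow{R}[\Psi\vdash P]$. Uniform left $\Delta;\Gamma\gg\Gamma'\xRightarrow{L}[\Psi\vdash P]$: ($\Box L$) from $\Delta,X{:}(\Phi\vdash Q);\Gamma\gg\Gamma'\xRightarrow{L}[\Psi\vdash P]$ infer $\Delta;\Gamma\gg\Gamma',y{:}[\Phi\vdash Q]\xRightarrow{L}[\Psi\vdash P]$; (shift) if $\tau$ is not a box type and $\Delta;\Gamma,y{:}\tau\gg\Gamma'\xRightarrow{L}[\Psi\vdash P]$ then $\Delta;\Gamma\gg\Gamma',y{:}\tau\xRightarrow{L}[\Psi\vdash P]$; (level) from $\Delta;\Psi\xRightarrow{u}P$ infer $\Delta;\Gamma\gg\cdot\xRightarrow{L}[\Psi\vdash P]$;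 (focus) if $y{:}\tau\in\Gamma$ and $\Delta;\Gamma>y{:}\tau\Rightarrow[\Psi\vdash P]$ then $\Delta;\Gamma\gg\cdot\xRightarrow{L}[\Psi\vdash P]$. Focused $\Delta;\Gamma>y{:}\tau\Rightarrow[\Psi\vdash P]$: ($\Pi^\Box L$) from $\Delta\Vdash C\Leftarrow U$ and $\Delta;\Gamma>y'{:}[\![C/X]\!]\tau\Rightarrow[\Psi\vdash P]$ infer $\Delta;\Gamma>y{:}\Pi^\Box X{:}U.\,\tau\Rightarrow[\Psi\vdash P]$; ($\rightarrow L$) from $\Delta;\Gamma\xRightarrow{R}\tau_1$ and $\Delta;\Gamma>y'{:}\tau_2\Rightarrow[\Psi\vdash P]$ infer $\Delta;\Gamma>y{:}\tau_1\rightarrow\tau_2\Rightarrow[\Psi\vdash P]$; (blur) from $\Delta;\cdot\gg\Gamma,y'{:}[\Phi\vdash Q]\xRightarrow{L}[\Psi\vdash P]$ infer $\Delta;\Gamma>y'{:}[\Phi\vdash Q]\Rightarrow[\Psi\vdash P]$. *)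

theory Defs
  imports Main
begin

type_synonym name = string

datatype nrm = Neu neu | Lam name nrm
and neu = Var name | Const name | App neu nrm | MVar name sub
and sub = SNil | Wk name | SCons sub nrm

datatype atp = Atom name "nrm list"

datatype tp = At atp | Arr tp tp | Pi name tp tp

text \<open>Context declarations: x:A (proof-relevant), x^:A (parameter).\<close>
datatype decl = Rel name tp | Par name tp

datatype lfctx = LNil | LVar name | LExt lfctx decl

datatype hctx = HNil | HVar name | HExt hctx name

datatype mtp = MBox lfctx atp | Schema name

datatype mtm = MT hctx neu | MCtx lfctx

datatype ctp = Box lfctx atp | CArr ctp ctp | CPi name mtp ctp

type_synonym mctx = "(name \<times> mtp) list"
type_synonym cctx = "(name \<times> ctp) list"
type_synonym sig = "(name \<times> tp) list"

text \<open>The operations the paper takes as given: hereditary substitution [M/x^]B,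
  hereditary application of a simultaneous substitution [sigma]B (for sigma : Phi),
  meta-substitution [[C/X]]tau, and checking of an LF context against a schema.\<close>
record ops =
  hsub :: "nrm \<Rightarrow> name \<Rightarrow> tp \<Rightarrow> tp"
  ssub :: "sub \<Rightarrow> lfctx \<Rightarrow> tp \<Rightarrow> tp"
  msub :: "mtm \<Rightarrow> name \<Rightarrow> ctp \<Rightarrow> ctp"
  schk :: "mctx \<Rightarrow> lfctx \<Rightarrow> name \<Rightarrow> bool"

fun ldecls :: "lfctx \<Rightarrow> decl list" where
  "ldecls LNil = []"
| "ldecls (LVar _) = []"
| "ldecls (LExt \<Psi> d) = ldecls \<Psi> @ [d]"

fun lapp :: "lfctx \<Rightarrow> decl list \<Rightarrow> lfctx" where
  "lapp \<Psi> [] = \<Psi>"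
| "lapp \<Psi> (d # ds) = lapp (LExt \<Psi> d) ds"

fun dname :: "decl \<Rightarrow> name" where
  "dname (Rel x _) = x"
| "dname (Par x _) = x"

fun hat :: "lfctx \<Rightarrow> hctx" where
  "hat LNil = HNil"
| "hat (LVar \<psi>) = HVar \<psi>"
| "hat (LExt \<Psi> d) = HExt (hat \<Psi>) (dname d)"

fun is_box :: "ctp \<Rightarrow> bool" where
  "is_box (Box _ _) = True"
| "is_box _ = False"

inductive lfchk :: "sig \<Rightarrow> ops \<Rightarrow> mctx \<Rightarrow> lfctx \<Rightarrow> nrm \<Rightarrow> tp \<Rightarrow> bool"
  and lfsyn :: "sig \<Rightarrow> ops \<Rightarrow> mctx \<Rightarrow> lfctx \<Rightarrow> neu \<Rightarrow> tp \<Rightarrow> bool"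
  and lfchks :: "sig \<Rightarrow> ops \<Rightarrow> mctx \<Rightarrow> lfctx \<Rightarrow> sub \<Rightarrow> lfctx \<Rightarrow> bool"
  for Sg :: sig and Ops :: ops where
  chk_neu: "lfsyn Sg Ops \<Delta> \<Psi> R (At P) \<Longrightarrow> lfchk Sg Ops \<Delta> \<Psi> (Neu R) (At P)"
| chk_lam_arr: "lfchk Sg Ops \<Delta> (LExt \<Psi> (Rel x A)) M B \<Longrightarrow> lfchk Sg Ops \<Delta> \<Psi> (Lam x M) (Arr A B)"
| chk_lam_pi: "lfchk Sg Ops \<Delta> (LExt \<Psi> (Par x A)) M B \<Longrightarrow> lfchk Sg Ops \<Delta> \<Psi> (Lam x M) (Pi x A B)"
| syn_rel: "Rel x A \<in> set (ldecls \<Psi>) \<Longrightarrow> lfsyn Sg Ops \<Delta> \<Psi> (Var x) A"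
| syn_par: "Par x A \<in> set (ldecls \<Psi>) \<Longrightarrow> lfsyn Sg Ops \<Delta> \<Psi> (Var x) A"
| syn_const: "(c, A) \<in> set Sg \<Longrightarrow> lfsyn Sg Ops \<Delta> \<Psi> (Const c) A"
| syn_app_arr: "lfsyn Sg Ops \<Delta> \<Psi> R (Arr A B) \<Longrightarrow> lfchk Sg Ops \<Delta> \<Psi> N A
      \<Longrightarrow> lfsyn Sg Ops \<Delta> \<Psi> (App R N) B"
| syn_app_pi: "lfsyn Sg Ops \<Delta> \<Psi> R (Pi x A B) \<Longrightarrow> lfchk Sg Ops \<Delta> \<Psi> N A
      \<Longrightarrow> lfsyn Sg Ops \<Delta> \<Psi> (App R N) (hsub Ops N x B)"
| syn_mvar: "(u, MBox \<Phi> P) \<in> set \<Delta> \<Longrightarrow> lfchks Sg Ops \<Delta> \<Psi> \<sigma> \<Phi>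
      \<Longrightarrow> lfsyn Sg Ops \<Delta> \<Psi> (MVar u \<sigma>) (ssub Ops \<sigma> \<Phi> (At P))"
| chks_nil: "lfchks Sg Ops \<Delta> \<Psi> SNil LNil"
| chks_wk: "lfchks Sg Ops \<Delta> (lapp (LVar \<psi>) ds) (Wk \<psi>) (LVar \<psi>)"
| chks_rel: "lfchks Sg Ops \<Delta> \<Psi> \<sigma> \<Phi> \<Longrightarrow> lfchk Sg Ops \<Delta> \<Psi> M (ssub Ops \<sigma> \<Phi> B)
      \<Longrightarrow> lfchks Sg Ops \<Delta> \<Psi> (SCons \<sigma> M) (LExt \<Phi> (Rel x B))"
| chks_par: "lfchks Sg Ops \<Delta> \<Psi> \<sigma> \<Phi> \<Longrightarrow> lfchk Sg Ops \<Delta> \<Psi> M (ssub Ops \<sigma> \<Phi> B)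
      \<Longrightarrow> lfchks Sg Ops \<Delta> \<Psi> (SCons \<sigma> M) (LExt \<Phi> (Par x B))"

inductive mchk :: "sig \<Rightarrow> ops \<Rightarrow> mctx \<Rightarrow> mtm \<Rightarrow> mtp \<Rightarrow> bool" for Sg :: sig and Ops :: ops where
  mchk_box: "lfchk Sg Ops \<Delta> \<Psi> (Neu R) (At P) \<Longrightarrow> mchk Sg Ops \<Delta> (MT (hat \<Psi>) R) (MBox \<Psi> P)"
| mchk_ctx: "schk Ops \<Delta> \<Psi> G \<Longrightarrow> mchk Sg Ops \<Delta> (MCtx \<Psi>) (Schema G)"

inductive seq :: "sig \<Rightarrow> ops \<Rightarrow> mctx \<Rightarrow> lfctx \<Rightarrow> tp \<Rightarrow> bool"
  and seqs :: "sig \<Rightarrow> ops \<Rightarrow> mctx \<Rightarrow> lfctx \<Rightarrow> sub \<Rightarrow> lfctx \<Rightarrow> bool"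
  for Sg :: sig and Ops :: ops where
  init_sig: "(c, A) \<in> set Sg \<Longrightarrow> seq Sg Ops \<Delta> \<Psi> A"
| init_psi: "Rel x A \<in> set (ldecls \<Psi>) \<Longrightarrow> seq Sg Ops \<Delta> \<Psi> A"
| piR: "seq Sg Ops \<Delta> (LExt \<Psi> (Par x A)) B \<Longrightarrow> seq Sg Ops \<Delta> \<Psi> (Pi x A B)"
| piL: "Rel x1 (Pi x A B) \<in> set (ldecls \<Psi>) \<Longrightarrow> lfchk Sg Ops \<Delta> \<Psi> M A
      \<Longrightarrow> seq Sg Ops \<Delta> (LExt \<Psi> (Rel x2 (hsub Ops M x B))) A' \<Longrightarrow> seq Sg Ops \<Delta> \<Psi> A'"
| arrR: "seq Sg Ops \<Delta> (LExt \<Psi> (Rel x A)) B \<Longrightarrow> seq Sg Ops \<Delta> \<Psi> (Arr A B)"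
| arrL: "Rel x1 (Arr A B) \<in> set (ldecls \<Psi>) \<Longrightarrow> seq Sg Ops \<Delta> \<Psi> A
      \<Longrightarrow> seq Sg Ops \<Delta> (LExt \<Psi> (Rel x2 B)) A' \<Longrightarrow> seq Sg Ops \<Delta> \<Psi> A'"
| reflect: "(u, MBox \<Phi> P) \<in> set \<Delta> \<Longrightarrow> seqs Sg Ops \<Delta> \<Psi> \<sigma> \<Phi>
      \<Longrightarrow> seq Sg Ops \<Delta> (LExt \<Psi> (Rel x (ssub Ops \<sigma> \<Phi> (At P)))) A \<Longrightarrow> seq Sg Ops \<Delta> \<Psi> A"
| seqs_nil: "seqs Sg Ops \<Delta> \<Psi> SNil LNil"
| seqs_wk: "seqs Sg Ops \<Delta> (lapp (LVar \<psi>) ds) (Wk \<psi>) (LVar \<psi>)"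
| seqs_rel: "seqs Sg Ops \<Delta> \<Psi> \<sigma> \<Phi> \<Longrightarrow> seq Sg Ops \<Delta> \<Psi> (ssub Ops \<sigma> \<Phi> B)
      \<Longrightarrow> seqs Sg Ops \<Delta> \<Psi> (SCons \<sigma> N) (LExt \<Phi> (Rel x B))"
| seqs_par: "seqs Sg Ops \<Delta> \<Psi> \<sigma> \<Phi> \<Longrightarrow> lfchk Sg Ops \<Delta> \<Psi> M (ssub Ops \<sigma> \<Phi> B)
      \<Longrightarrow> seqs Sg Ops \<Delta> \<Psi> (SCons \<sigma> M) (LExt \<Phi> (Par x B))"

inductive cseq :: "sig \<Rightarrow> ops \<Rightarrow> mctx \<Rightarrow> cctx \<Rightarrow> ctp \<Rightarrow> bool"
  for Sg :: sig and Ops :: ops where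
  cpiR: "cseq Sg Ops (\<Delta> @ [(X, U)]) \<Gamma> \<tau> \<Longrightarrow> cseq Sg Ops \<Delta> \<Gamma> (CPi X U \<tau>)"
| cpiL: "(y1, CPi X U \<tau>') \<in> set \<Gamma> \<Longrightarrow> mchk Sg Ops \<Delta> C U
      \<Longrightarrow> cseq Sg Ops \<Delta> (\<Gamma> @ [(y2, msub Ops C X \<tau>')]) \<tau> \<Longrightarrow> cseq Sg Ops \<Delta> \<Gamma> \<tau>"
| carrL: "(y1, CArr \<tau>1 \<tau>2) \<in> set \<Gamma> \<Longrightarrow> cseq Sg Ops \<Delta> \<Gamma> \<tau>1
      \<Longrightarrow> cseq Sg Ops \<Delta> (\<Gamma> @ [(y2, \<tau>2)]) \<tau> \<Longrightarrow> cseq Sg Ops \<Delta> \<Gamma> \<tau>"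
| carrR: "cseq Sg Ops \<Delta> (\<Gamma> @ [(y, \<tau>1)]) \<tau>2 \<Longrightarrow> cseq Sg Ops \<Delta> \<Gamma> (CArr \<tau>1 \<tau>2)"
| cinit: "(y, \<tau>) \<in> set \<Gamma> \<Longrightarrow> cseq Sg Ops \<Delta> \<Gamma> \<tau>"
| boxR: "seq Sg Ops \<Delta> \<Psi> (At P) \<Longrightarrow> cseq Sg Ops \<Delta> \<Gamma> (Box \<Psi> P)"
| boxL: "(y, Box \<Psi> P) \<in> set \<Gamma> \<Longrightarrow> cseq Sg Ops (\<Delta> @ [(X, MBox \<Psi> P)]) \<Gamma> \<tau>
      \<Longrightarrow> cseq Sg Ops \<Delta> \<Gamma> \<tau>"

inductive uni :: "sig \<Rightarrow> ops \<Rightarrow> mctx \<Rightarrow> lfctx \<Rightarrow> tp \<Rightarrow> bool"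
  and unis :: "sig \<Rightarrow> ops \<Rightarrow> mctx \<Rightarrow> lfctx \<Rightarrow> sub \<Rightarrow> lfctx \<Rightarrow> bool"
  and foc :: "sig \<Rightarrow> ops \<Rightarrow> mctx \<Rightarrow> lfctx \<Rightarrow> name \<Rightarrow> tp \<Rightarrow> atp \<Rightarrow> bool"
  for Sg :: sig and Ops :: ops where
  u_piR: "uni Sg Ops \<Delta> (LExt \<Psi> (Par x A)) B \<Longrightarrow> uni Sg Ops \<Delta> \<Psi> (Pi x A B)"
| u_arrR: "uni Sg Ops \<Delta> (LExt \<Psi> (Rel x A)) B \<Longrightarrow> uni Sg Ops \<Delta> \<Psi> (Arr A B)"
| u_transD: "(X, MBox \<Phi> Q) \<in> set \<Delta> \<Longrightarrow> unis Sg Ops \<Delta> \<Psi> \<sigma> \<Phi>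
      \<Longrightarrow> ssub Ops \<sigma> \<Phi> (At Q) = At P \<Longrightarrow> uni Sg Ops \<Delta> \<Psi> (At P)"
| u_transP: "Rel x A \<in> set (ldecls \<Psi>) \<Longrightarrow> foc Sg Ops \<Delta> \<Psi> x A P \<Longrightarrow> uni Sg Ops \<Delta> \<Psi> (At P)"
| us_nil: "unis Sg Ops \<Delta> \<Psi> SNil LNil"
| us_wk: "unis Sg Ops \<Delta> (lapp (LVar \<psi>) ds) (Wk \<psi>) (LVar \<psi>)"
| us_rel: "unis Sg Ops \<Delta> \<Psi> \<sigma> \<Phi> \<Longrightarrow> uni Sg Ops \<Delta> \<Psi> (ssub Ops \<sigma> \<Phi> B)
      \<Longrightarrow> unis Sg Ops \<Delta> \<Psi> (SCons \<sigma> N) (LExt \<Phi> (Rel x B))"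
| us_par: "unis Sg Ops \<Delta> \<Psi> \<sigma> \<Phi> \<Longrightarrow> lfchk Sg Ops \<Delta> \<Psi> M (ssub Ops \<sigma> \<Phi> B)
      \<Longrightarrow> unis Sg Ops \<Delta> \<Psi> (SCons \<sigma> M) (LExt \<Phi> (Par x B))"
| f_init: "foc Sg Ops \<Delta> \<Psi> x (At P) P"
| f_arrL: "uni Sg Ops \<Delta> \<Psi> A \<Longrightarrow> foc Sg Ops \<Delta> \<Psi> x' B P \<Longrightarrow> foc Sg Ops \<Delta> \<Psi> x (Arr A B) P"
| f_piL: "lfchk Sg Ops \<Delta> \<Psi> M A \<Longrightarrow> foc Sg Ops \<Delta> \<Psi> x' (hsub Ops M y B) P
      \<Longrightarrow> foc Sg Ops \<Delta> \<Psi> x (Pi y A B) P"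

definition mfoc :: "sig \<Rightarrow> ops \<Rightarrow> mctx \<Rightarrow> name \<Rightarrow> mtp \<Rightarrow> lfctx \<Rightarrow> atp \<Rightarrow> bool" where
  "mfoc Sg Ops \<Delta> X U \<Psi> P \<longleftrightarrow>
     (\<exists>\<Phi> Q \<sigma>. U = MBox \<Phi> Q \<and> unis Sg Ops (\<Delta> @ [(X, U)]) \<Psi> \<sigma> \<Phi> \<and> ssub Ops \<sigma> \<Phi> (At Q) = At P)"

inductive ur :: "sig \<Rightarrow> ops \<Rightarrow> mctx \<Rightarrow> cctx \<Rightarrow> ctp \<Rightarrow> bool"
  and ul :: "sig \<Rightarrow> ops \<Rightarrow> mctx \<Rightarrow> cctx \<Rightarrow> cctx \<Rightarrow> lfctx \<Rightarrow> atp \<Rightarrow> bool"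
  and cf :: "sig \<Rightarrow> ops \<Rightarrow> mctx \<Rightarrow> cctx \<Rightarrow> name \<Rightarrow> ctp \<Rightarrow> lfctx \<Rightarrow> atp \<Rightarrow> bool"
  for Sg :: sig and Ops :: ops where
  ur_arrR: "ur Sg Ops \<Delta> (\<Gamma> @ [(y, \<tau>1)]) \<tau>2 \<Longrightarrow> ur Sg Ops \<Delta> \<Gamma> (CArr \<tau>1 \<tau>2)"
| ur_piR: "ur Sg Ops (\<Delta> @ [(X, U)]) \<Gamma> \<tau> \<Longrightarrow> ur Sg Ops \<Delta> \<Gamma> (CPi X U \<tau>)"
| ur_lr: "ul Sg Ops \<Delta> [] \<Gamma> \<Psi> P \<Longrightarrow> ur Sg Ops \<Delta> \<Gamma> (Box \<Psi> P)"
| ul_boxL: "ul Sg Ops (\<Delta> @ [(X, MBox \<Phi> Q)]) \<Gamma> \<Gamma>' \<Psi> P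
      \<Longrightarrow> ul Sg Ops \<Delta> \<Gamma> (\<Gamma>' @ [(y, Box \<Phi> Q)]) \<Psi> P"
| ul_shift: "\<not> is_box \<tau> \<Longrightarrow> ul Sg Ops \<Delta> (\<Gamma> @ [(y, \<tau>)]) \<Gamma>' \<Psi> P
      \<Longrightarrow> ul Sg Ops \<Delta> \<Gamma> (\<Gamma>' @ [(y, \<tau>)]) \<Psi> P"
| ul_level: "uni Sg Ops \<Delta> \<Psi> (At P) \<Longrightarrow> ul Sg Ops \<Delta> \<Gamma> [] \<Psi> P"
| ul_focus: "(y, \<tau>) \<in> set \<Gamma> \<Longrightarrow> cf Sg Ops \<Delta> \<Gamma> y \<tau> \<Psi> P \<Longrightarrow> ul Sg Ops \<Delta> \<Gamma> [] \<Psi> P"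
| cf_piL: "mchk Sg Ops \<Delta> C U \<Longrightarrow> cf Sg Ops \<Delta> \<Gamma> y' (msub Ops C X \<tau>) \<Psi> P
      \<Longrightarrow> cf Sg Ops \<Delta> \<Gamma> y (CPi X U \<tau>) \<Psi> P"
| cf_arrL: "ur Sg Ops \<Delta> \<Gamma> \<tau>1 \<Longrightarrow> cf Sg Ops \<Delta> \<Gamma> y' \<tau>2 \<Psi> P
      \<Longrightarrow> cf Sg Ops \<Delta> \<Gamma> y (CArr \<tau>1 \<tau>2) \<Psi> P"
| cf_blur: "ul Sg Ops \<Delta> [] (\<Gamma> @ [(y', Box \<Phi> Q)]) \<Psi> P
      \<Longrightarrow> cf Sg Ops \<Delta> \<Gamma> y' (Box \<Phi> Q) \<Psi> P"

end

theory Submission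
  imports Defs
begin

fun root :: "lfctx \<Rightarrow> lfctx" where
  "root LNil = LNil"
| "root (LVar p) = LVar p"
| "root (LExt \<Psi> d) = root \<Psi>"

definition lsub :: "lfctx \<Rightarrow> lfctx \<Rightarrow> bool" where
  "lsub \<Psi> \<Psi>' \<longleftrightarrow> root \<Psi> = root \<Psi>' \<and> set (ldecls \<Psi>) \<subseteq> set (ldecls \<Psi>')"

lemma lsub_ext: "lsub \<Psi> \<Psi>' \<Longrightarrow> lsub (LExt \<Psi> d) (LExt \<Psi>' d)"
  by (auto simp: lsub_def)

lemma root_lapp: "root (lapp \<Psi> ds) = root \<Psi>"
  by (induction ds arbitrary: \<Psi>) auto

lemma lapp_snoc: "lapp \<Psi> (ds @ [d]) = LExt (lapp \<Psi> ds) d"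
  by (induction ds arbitrary: \<Psi>) auto

lemma root_lapp_ex: "root \<Psi> = LVar p \<Longrightarrow> \<exists>ds. \<Psi> = lapp (LVar p) ds"
proof (induction \<Psi>)
  case (LExt \<Psi> d)
  then obtain ds where "\<Psi> = lapp (LVar p) ds" by auto
  then show ?case by (metis lapp_snoc)
qed (auto intro: exI[of _ "[]"])

lemma lsub_wk: "lsub (lapp (LVar p) ds) \<Psi>' \<Longrightarrow> \<exists>ds'. \<Psi>' = lapp (LVar p) ds'"
  unfolding lsub_def by (metis root_lapp root.simps(2) root_lapp_ex)

lemma lf_weak:
  "lfchk Sg Ops \<Delta> \<Psi> M A \<Longrightarrow> (\<And>\<Psi>'. lsub \<Psi> \<Psi>' \<Longrightarrow> lfchk Sg Ops \<Delta> \<Psi>' M A)"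
  "lfsyn Sg Ops \<Delta> \<Psi> R A \<Longrightarrow> (\<And>\<Psi>'. lsub \<Psi> \<Psi>' \<Longrightarrow> lfsyn Sg Ops \<Delta> \<Psi>' R A)"
  "lfchks Sg Ops \<Delta> \<Psi> \<sigma> \<Phi> \<Longrightarrow> (\<And>\<Psi>'. lsub \<Psi> \<Psi>' \<Longrightarrow> lfchks Sg Ops \<Delta> \<Psi>' \<sigma> \<Phi>)"
proof (induction arbitrary: and and rule: lfchk_lfsyn_lfchks.inducts)
  case (chks_wk \<Delta> \<psi> ds)
  then show ?case using lsub_wk by (metis lfchk_lfsyn_lfchks.chks_wk)
next
  case (chk_lam_arr \<Delta> \<Psi> x A M B)
  then show ?case by (auto intro: lfchk_lfsyn_lfchks.chk_lam_arr lsub_ext)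
next
  case (chk_lam_pi \<Delta> \<Psi> x A M B)
  then show ?case by (auto intro: lfchk_lfsyn_lfchks.chk_lam_pi lsub_ext)
qed (auto simp: lsub_def intro: lfchk_lfsyn_lfchks.intros lsub_ext)

lemma seq_weak:
  "seq Sg Ops \<Delta> \<Psi> A \<Longrightarrow> (\<And>\<Psi>'. lsub \<Psi> \<Psi>' \<Longrightarrow> seq Sg Ops \<Delta> \<Psi>' A)"
  "seqs Sg Ops \<Delta> \<Psi> \<sigma> \<Phi> \<Longrightarrow> (\<And>\<Psi>'. lsub \<Psi> \<Psi>' \<Longrightarrow> seqs Sg Ops \<Delta> \<Psi>' \<sigma> \<Phi>)"
proof (induction arbitrary: and rule: seq_seqs.inducts)
  case (init_psi x A \<Psi> \<Delta>)
  then show ?case by (auto simp: lsub_def intro: seq_seqs.init_psi)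
next
  case (piR \<Delta> \<Psi> x A B)
  then show ?case by (auto intro: seq_seqs.piR lsub_ext)
next
  case (piL x1 x A B \<Psi> \<Delta> M x2 A')
  show ?case
    apply (rule seq_seqs.piL[where ?x1.0=x1 and x=x and A=A and B=B and M=M and ?x2.0=x2])
    using piL by (auto intro: lf_weak lsub_ext simp del: ldecls.simps root.simps, auto simp: lsub_def)
next
  case (arrR \<Delta> \<Psi> x A B)
  then show ?case by (auto intro: seq_seqs.arrR lsub_ext)
next
  case (arrL x1 A B \<Psi> \<Delta> x2 A')
  show ?case
    apply (rule seq_seqs.arrL[where ?x1.0=x1 and A=A and B=B and ?x2.0=x2])
    using arrL by (auto intro: lsub_ext simp del: ldecls.simps root.simps, auto simp: lsub_def)
next
  case (reflect u \<Phi> P \<Delta> \<Psi> \<sigma> x A)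
  show ?case
    apply (rule seq_seqs.reflect[where u=u and \<Phi>=\<Phi> and P=P and \<sigma>=\<sigma> and x=x])
    using reflect by (auto intro: lsub_ext)
next
  case (seqs_wk \<Delta> \<psi> ds)
  then show ?case using lsub_wk by (metis seq_seqs.seqs_wk)
next
  case (seqs_par \<Delta> \<Psi> \<sigma> \<Phi> M B x)
  then show ?case by (auto intro: seq_seqs.seqs_par lf_weak)
qed (auto intro: seq_seqs.intros)

lemma lsub_extR: "lsub \<Psi> (LExt \<Psi> d)"
  by (auto simp: lsub_def)

lemma lsub_mid: "lsub (LExt \<Psi> d) (LExt (LExt \<Psi> e) d)"
  by (auto simp: lsub_def)

lemma lsub_contr: "Rel x A \<in> set (ldecls \<Psi>) \<Longrightarrow> lsub (LExt \<Psi> (Rel x A)) \<Psi>"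
  by (auto simp: lsub_def)

lemma focus_sound:
  "uni Sg Ops \<Delta> \<Psi> A \<Longrightarrow> seq Sg Ops \<Delta> \<Psi> A"
  "unis Sg Ops \<Delta> \<Psi> \<sigma> \<Phi> \<Longrightarrow> seqs Sg Ops \<Delta> \<Psi> \<sigma> \<Phi>"
  "foc Sg Ops \<Delta> \<Psi> x A P \<Longrightarrow> seq Sg Ops \<Delta> (LExt \<Psi> (Rel x A)) (At P)"
proof (induction rule: uni_unis_foc.inducts)
  case (u_transD X \<Phi> Q \<Delta> \<Psi> \<sigma> P)
  show ?case
    apply (rule seq_seqs.reflect[where u=X and \<Phi>=\<Phi> and P=Q and \<sigma>=\<sigma> and x=X])
    using u_transD by (auto intro: seq_seqs.init_psi)
next
  case (u_transP x A \<Psi> \<Delta> P)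
  then show ?case using seq_weak(1) lsub_contr by blast
next
  case (f_init \<Delta> \<Psi> x P)
  then show ?case by (auto intro: seq_seqs.init_psi)
next
  case (f_arrL \<Delta> \<Psi> A x' B P x)
  show ?case
    apply (rule seq_seqs.arrL[where ?x1.0=x and A=A and B=B and ?x2.0=x'])
    using f_arrL by (auto intro: seq_weak lsub_extR lsub_mid)
next
  case (f_piL \<Delta> \<Psi> M A x' y B P x)
  show ?case
    apply (rule seq_seqs.piL[where ?x1.0=x and x=y and A=A and B=B and M=M and ?x2.0=x'])
    using f_piL by (auto intro: seq_weak lf_weak lsub_extR lsub_mid)
qed (auto intro: seq_seqs.intros)

lemma mfoc_sound: "mfoc Sg Ops \<Delta> X U \<Psi> P \<Longrightarrow> seq Sg Ops (\<Delta> @ [(X, U)]) \<Psi> (At P)"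
  unfolding mfoc_def
proof (elim exE conjE)
  fix \<Phi> Q \<sigma>
  assume h: "U = MBox \<Phi> Q" "unis Sg Ops (\<Delta> @ [(X, U)]) \<Psi> \<sigma> \<Phi>" "ssub Ops \<sigma> \<Phi> (At Q) = At P"
  show "seq Sg Ops (\<Delta> @ [(X, U)]) \<Psi> (At P)"
    apply (rule seq_seqs.reflect[where u=X and \<Phi>=\<Phi> and P=Q and \<sigma>=\<sigma> and x=X])
    using h focus_sound(2) by (auto intro: seq_seqs.init_psi)
qed

lemma cseq_weak: "cseq Sg Ops \<Delta> \<Gamma> \<tau> \<Longrightarrow> set \<Gamma> \<subseteq> set \<Gamma>' \<Longrightarrow> cseq Sg Ops \<Delta> \<Gamma>' \<tau>"
proof (induction arbitrary: \<Gamma>' rule: cseq.induct)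
  case (cpiL y1 X U \<tau>' \<Gamma> \<Delta> C y2 \<tau>)
  show ?case
    apply (rule cseq.cpiL[where ?y1.0=y1 and X=X and U=U and \<tau>'=\<tau>' and C=C and ?y2.0=y2])
    using cpiL.hyps cpiL.prems cpiL.IH[of "\<Gamma>' @ [(y2, msub Ops C X \<tau>')]"] by auto
next
  case (carrL y1 \<tau>1 \<tau>2 \<Gamma> \<Delta> y2 \<tau>)
  show ?case
    apply (rule cseq.carrL[where ?y1.0=y1 and ?\<tau>1.0=\<tau>1 and ?\<tau>2.0=\<tau>2 and ?y2.0=y2])
    using carrL.hyps carrL.prems carrL.IH(1)[of "\<Gamma>'"] carrL.IH(2)[of "\<Gamma>' @ [(y2, \<tau>2)]"] by auto
next
  case (carrR \<Delta> \<Gamma> y \<tau>1 \<tau>2)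
  show ?case
    apply (rule cseq.carrR[where y=y])
    using carrR.prems carrR.IH[of "\<Gamma>' @ [(y, \<tau>1)]"] by auto
next
  case (boxL y \<Psi> P \<Gamma> \<Delta> X \<tau>)
  show ?case
    apply (rule cseq.boxL[where y=y and X=X])
    using boxL by auto
qed (auto intro: cseq.intros)

lemma comp_sound:
  "ur Sg Ops \<Delta> \<Gamma> \<tau> \<Longrightarrow> cseq Sg Ops \<Delta> \<Gamma> \<tau>"
  "ul Sg Ops \<Delta> \<Gamma> \<Gamma>' \<Psi> P \<Longrightarrow> cseq Sg Ops \<Delta> (\<Gamma> @ \<Gamma>') (Box \<Psi> P)"
  "cf Sg Ops \<Delta> \<Gamma> y \<tau> \<Psi> P \<Longrightarrow> cseq Sg Ops \<Delta> (\<Gamma> @ [(y, \<tau>)]) (Box \<Psi> P)"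
proof (induction rule: ur_ul_cf.inducts)
  case (ur_arrR \<Delta> \<Gamma> y \<tau>1 \<tau>2)
  then show ?case by (auto intro: cseq.carrR)
next
  case (ur_piR \<Delta> X U \<Gamma> \<tau>)
  then show ?case by (auto intro: cseq.cpiR)
next
  case (ur_lr \<Delta> \<Gamma> \<Psi> P)
  then show ?case by simp
next
  case (ul_boxL \<Delta> X \<Phi> Q \<Gamma> \<Gamma>' \<Psi> P y)
  show ?case
    apply (rule cseq.boxL[where y=y and X=X])
    using ul_boxL by (auto intro: cseq_weak)
next
  case (ul_shift \<tau> \<Delta> \<Gamma> y \<Gamma>' \<Psi> P)
  then show ?case by (auto intro: cseq_weak)
next
  case (ul_level \<Delta> \<Psi> P \<Gamma>)
  then show ?case by (auto intro: cseq.boxR focus_sound)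
next
  case (ul_focus y \<tau> \<Gamma> \<Delta> \<Psi> P)
  then show ?case by (auto intro: cseq_weak)
next
  case (cf_piL \<Delta> C U \<Gamma> y' X \<tau> \<Psi> P y)
  show ?case
    apply (rule cseq.cpiL[where ?y1.0=y and X=X and U=U and \<tau>'=\<tau> and C=C and ?y2.0=y'])
    using cf_piL by (auto intro: cseq_weak)
next
  case (cf_arrL \<Delta> \<Gamma> \<tau>1 y' \<tau>2 \<Psi> P y)
  show ?case
    apply (rule cseq.carrL[where ?y1.0=y and ?\<tau>1.0=\<tau>1 and ?\<tau>2.0=\<tau>2 and ?y2.0=y'])
    using cf_arrL by (auto intro: cseq_weak)
next
  case (cf_blur \<Delta> \<Gamma> y' \<Phi> Q \<Psi> P)
  then show ?case by simp
qed

theorem mainTheorem2: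
  fixes Sg :: sig and Ops :: ops and \<Delta> :: mctx and \<Psi> \<Phi> :: lfctx and \<Gamma> \<Gamma>' :: cctx
    and A :: tp and \<sigma> :: sub and x X y :: name and P :: atp and U :: mtp and \<tau> :: ctp
  shows "(uni Sg Ops \<Delta> \<Psi> A \<longrightarrow> seq Sg Ops \<Delta> \<Psi> A)
    \<and> (unis Sg Ops \<Delta> \<Psi> \<sigma> \<Phi> \<longrightarrow> seqs Sg Ops \<Delta> \<Psi> \<sigma> \<Phi>)
    \<and> (foc Sg Ops \<Delta> \<Psi> x A P \<longrightarrow> seq Sg Ops \<Delta> (LExt \<Psi> (Rel x A)) (At P))
    \<and> (mfoc Sg Ops \<Delta> X U \<Psi> P \<longrightarrow> seq Sg Ops (\<Delta> @ [(X, U)]) \<Psi> (At P))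
    \<and> (ur Sg Ops \<Delta> \<Gamma> \<tau> \<longrightarrow> cseq Sg Ops \<Delta> \<Gamma> \<tau>)
    \<and> (ul Sg Ops \<Delta> \<Gamma> \<Gamma>' \<Psi> P \<longrightarrow> cseq Sg Ops \<Delta> (\<Gamma> @ \<Gamma>') (Box \<Psi> P))
    \<and> (cf Sg Ops \<Delta> \<Gamma> y \<tau> \<Psi> P \<longrightarrow> cseq Sg Ops \<Delta> (\<Gamma> @ [(y, \<tau>)]) (Box \<Psi> P))"
  by (intro conjI impI; (erule focus_sound mfoc_sound comp_sound)?)

end
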